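(* Let $A$ be an $n\times n$ irreducible nonnegative matrix with largest eigenvalue $1$ and positive $w$ with $Aw=w$, $A^Tw=w$, and let $L=I-A$. Let $S,T\subseteq[n]$ be disjoint with $U=S\cup T$ nonempty, let $a\in\{0,1\}^{U}$ with $a_i=1$ for $i\in S$ and $a_i=0$ for $i\in T$, and let $q\in\mathbb R^n$ satisfy $q_i=w_ia_i$ for $i\in U$ and $(Lq)_i=0$ for $i\notin U$. Then $0\le q_i\le w_i$ for every $i\in[n]$, and $(Lq)_i\ge0$ for every $i\in S$ and $(Lq)_j\le0$ for every $j\in T$. *)

theory Defs
  imports "HOL-Analysis.Analysis"
begin

definition nonneg_matrix :: "real^'n^'n \<Rightarrow> bool" where
  "nonneg_matrix A \<longleftrightarrow> (\<forall>i j. A $ i $ j \<ge> 0)"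

definition irreducible_matrix :: "real^'n^'n \<Rightarrow> bool" where
  "irreducible_matrix A \<longleftrightarrow> (\<forall>i j. (i, j) \<in> {(k, l). A $ k $ l \<noteq> 0}\<^sup>*)"

definition largest_eigenvalue_one :: "real^'n^'n \<Rightarrow> bool" where
  "largest_eigenvalue_one A \<longleftrightarrow>
     (\<exists>x. x \<noteq> 0 \<and> A *v x = x) \<and>
     (\<forall>(c::real) x. x \<noteq> 0 \<and> A *v x = c *\<^sub>R x \<longrightarrow> c \<le> 1)"

end

theory Submission
  imports Defs
begin

lemma mv_comp: "(A *v x) $ i = (\<Sum>j\<in>UNIV. A $ i $ j * x $ j)"
  by (simp add: matrix_vector_mult_def)

lemma L_comp: fixes A :: "real^'n^'n" shows "((mat 1 - A) *v q) $ i = q $ i - (A *v q) $ i"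
  by (subst matrix_vector_mult_diff_rdistrib) simp

lemma spread:
  fixes A :: "real^'n^'n" and p :: "real^'n"
  assumes nn: "nonneg_matrix A" and irr: "irreducible_matrix A"
    and pn: "\<forall>i. p $ i \<ge> 0"
    and z: "\<forall>i. p $ i = 0 \<longrightarrow> (A *v p) $ i = 0"
    and i0: "p $ i0 = 0"
  shows "p $ j = 0"
proof -
  have step: "p $ l = 0" if "p $ k = 0" "A $ k $ l \<noteq> 0" for k l
  proof -
    have "(\<Sum>j\<in>UNIV. A $ k $ j * p $ j) = 0" using z that(1) by (simp add: mv_comp)
    moreover have "\<forall>j\<in>UNIV. 0 \<le> A $ k $ j * p $ j"
      using nn pn by (simp add: nonneg_matrix_def)
    ultimately have "A $ k $ l * p $ l = 0"
      using sum_nonneg_eq_0_iff[of UNIV "\<lambda>j. A $ k $ j * p $ j"] by simp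
    with that(2) show ?thesis by simp
  qed
  have "(i0, j) \<in> {(k, l). A $ k $ l \<noteq> 0}\<^sup>*" using irr by (simp add: irreducible_matrix_def)
  then show ?thesis
    by (induction rule: rtrancl_induct) (use i0 step in auto)
qed

theorem lemma5p32:
  fixes A :: "real^'n^'n" and w q :: "real^'n" and S T :: "'n set" and a :: "'n \<Rightarrow> real"
  assumes "nonneg_matrix A" and "irreducible_matrix A" and "largest_eigenvalue_one A"
    and "\<forall>i. w $ i > 0" and "A *v w = w" and "transpose A *v w = w"
    and "S \<inter> T = {}" and "S \<union> T \<noteq> {}"
    and "\<forall>i\<in>S \<union> T. a i \<in> {0, 1}" and "\<forall>i\<in>S. a i = 1" and "\<forall>i\<in>T. a i = 0"
    and "\<forall>i\<in>S \<union> T. q $ i = w $ i * a i"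
    and "\<forall>i. i \<notin> S \<union> T \<longrightarrow> ((mat 1 - A) *v q) $ i = 0"
  shows "(\<forall>i. 0 \<le> q $ i \<and> q $ i \<le> w $ i)
    \<and> (\<forall>i\<in>S. ((mat 1 - A) *v q) $ i \<ge> 0)
    \<and> (\<forall>j\<in>T. ((mat 1 - A) *v q) $ j \<le> 0)"
proof -
  note nn = assms(1) and irr = assms(2) and wp = assms(4) and Aw = assms(5)
  obtain u where u: "u \<in> S \<union> T" using assms(8) by blast
  have qU: "0 \<le> q $ i \<and> q $ i \<le> w $ i" if "i \<in> S \<union> T" for i
    using assms(9,12) wp that by (metis insert_iff singletonD mult_zero_right mult_1_right less_imp_le order_refl)
  have harm: "q $ i = (A *v q) $ i" if "i \<notin> S \<union> T" for i
    using assms(13) that by (simp add: L_comp)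
  have Awi: "(A *v w) $ i = w $ i" for i using Aw by simp
  define r where "r = (\<lambda>i. q $ i / w $ i)"
  have fin: "finite (range r)" by simp
  define M where "M = Max (range r)"
  define m where "m = Min (range r)"
  have rM: "r i \<le> M" for i unfolding M_def using fin by simp
  have rm: "m \<le> r i" for i unfolding m_def using fin by simp
  obtain iM where iM: "r iM = M" unfolding M_def using Max_in[OF fin] by (metis UNIV_not_empty empty_is_image imageE)
  obtain im where im: "r im = m" unfolding m_def using Min_in[OF fin] by (metis UNIV_not_empty empty_is_image imageE)
  have M1: "M \<le> 1"
  proof (rule ccontr)
    assume M: "\<not> M \<le> 1"
    define p where "p = M *\<^sub>R w - q"
    have pc: "p $ i = M * w $ i - q $ i" for i by (simp add: p_def)
    have pn: "\<forall>i. p $ i \<ge> 0"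
    proof
      fix i
      have "q $ i / w $ i \<le> M" using rM[of i] by (simp add: r_def)
      then show "p $ i \<ge> 0" using wp[rule_format, of i] by (simp add: pc pos_divide_le_eq)
    qed
    have z: "\<forall>i. p $ i = 0 \<longrightarrow> (A *v p) $ i = 0"
    proof (intro allI impI)
      fix i assume "p $ i = 0"
      then have qi: "q $ i = M * w $ i" by (simp add: pc)
      have "i \<notin> S \<union> T"
      proof
        assume "i \<in> S \<union> T"
        then have "M * w $ i \<le> w $ i" using qU qi by metis
        then show False using M wp[rule_format, of i] by (simp add: mult_le_cancel_right1)
      qed
      then have "q $ i = (A *v q) $ i" by (rule harm)
      moreover have "(A *v p) $ i = M * (A *v w) $ i - (A *v q) $ i"
        by (simp add: p_def matrix_vector_mult_diff_distrib matrix_vector_mult_scaleR)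
      ultimately show "(A *v p) $ i = 0" using qi Awi by simp
    qed
    have "p $ iM = 0" using iM wp[rule_format, of iM] by (simp add: pc r_def field_simps)
    from spread[OF nn irr pn z this] have "q $ u = M * w $ u" by (simp add: pc)
    then have "M * w $ u \<le> w $ u" using qU[OF u] by simp
    then show False using M wp[rule_format, of u] by (simp add: mult_le_cancel_right1)
  qed
  have m0: "0 \<le> m"
  proof (rule ccontr)
    assume M: "\<not> 0 \<le> m"
    define p where "p = q - m *\<^sub>R w"
    have pc: "p $ i = q $ i - m * w $ i" for i by (simp add: p_def)
    have pn: "\<forall>i. p $ i \<ge> 0"
    proof
      fix i
      have "m \<le> q $ i / w $ i" using rm[of i] by (simp add: r_def)
      then show "p $ i \<ge> 0" using wp[rule_format, of i] by (simp add: pc pos_le_divide_eq)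
    qed
    have z: "\<forall>i. p $ i = 0 \<longrightarrow> (A *v p) $ i = 0"
    proof (intro allI impI)
      fix i assume "p $ i = 0"
      then have qi: "q $ i = m * w $ i" by (simp add: pc)
      have "i \<notin> S \<union> T"
      proof
        assume "i \<in> S \<union> T"
        then have "0 \<le> m * w $ i" using qU qi by metis
        then show False using M wp[rule_format, of i] by (simp add: zero_le_mult_iff)
      qed
      then have "q $ i = (A *v q) $ i" by (rule harm)
      moreover have "(A *v p) $ i = (A *v q) $ i - m * (A *v w) $ i"
        by (simp add: p_def matrix_vector_mult_diff_distrib matrix_vector_mult_scaleR)
      ultimately show "(A *v p) $ i = 0" using qi Awi by simp
    qed
    have "p $ im = 0" using im wp[rule_format, of im] by (simp add: pc r_def field_simps)
    from spread[OF nn irr pn z this] have "q $ u = m * w $ u" by (simp add: pc)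
    then have "0 \<le> m * w $ u" using qU[OF u] by simp
    then show False using M wp[rule_format, of u] by (simp add: zero_le_mult_iff)
  qed
  have bnd: "0 \<le> q $ i \<and> q $ i \<le> w $ i" for i
  proof -
    have "0 \<le> r i" "r i \<le> 1" using rm[of i] rM[of i] m0 M1 by auto
    then show ?thesis using wp[rule_format, of i]
      by (simp add: r_def pos_divide_le_eq pos_le_divide_eq)
  qed
  have Aq_le: "(A *v q) $ i \<le> w $ i" for i
  proof -
    have "(A *v q) $ i \<le> (A *v w) $ i" unfolding mv_comp
      by (rule sum_mono) (use nn bnd in \<open>auto simp: nonneg_matrix_def intro: mult_left_mono\<close>)
    then show ?thesis using Awi by simp
  qed
  have Aq_ge: "0 \<le> (A *v q) $ i" for i
    unfolding mv_comp by (rule sum_nonneg) (use nn bnd in \<open>auto simp: nonneg_matrix_def\<close>)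
  show ?thesis
  proof (intro conjI ballI allI)
    fix i show "0 \<le> q $ i" "q $ i \<le> w $ i" using bnd by auto
  next
    fix i assume "i \<in> S"
    then have "q $ i = w $ i" using assms(10,12) by simp
    then show "((mat 1 - A) *v q) $ i \<ge> 0" using Aq_le[of i] by (simp add: L_comp)
  next
    fix j assume "j \<in> T"
    then have "q $ j = 0" using assms(11,12) by simp
    then show "((mat 1 - A) *v q) $ j \<le> 0" using Aq_ge[of j] by (simp add: L_comp)
  qed
qed

end
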